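(* Let $d\geq 1$ and $s\geq 2$ be integers, let $A:=\{\sqrt{2i}\colon i\in\{1,\dots,s\}\}$, and let $\mathcal{W}:=\{(w_1,\dots,w_d)^T\in\mathbb{R}^d\colon w_i\in A \text{ for all } i\in\{1,\dots,d\}\}$. For $w=(w_1,\dots,w_d)^T\in\mathcal{W}$ let $\mathcal{V}_w$ be the set of real solution vectors $v=(v_1,\dots,v_d)^T\in\mathbb{R}^d$ of the system of $d$ equations \[ \sum_{i=1}^d\left(\frac{w_1^2-w_i^2}{2}+v_1\right)^2=w_1^2+2v_1-1,\qquad v_j=\frac{w_1^2-w_j^2}{2}+v_1\quad (j\in\{2,\dots,d\}). \] Let $\Gamma$ be the graph whose vertex set is $\bigcup_{w\in\mathcal{W}}\mathcal{V}_w$, in which two distinct vertices $x,y$ are adjacent if and only if $\mu(x,y)\in A$, and let $\omega(\Gamma)$ be the size of a maximum clique of $\Gamma$. Then for some subset $A'\subseteq A$ there exists a set $\mathcal{X}\subset\mathbb{R}^d$ with $d+\omega(\Gamma)$ elements which is an $|A'|$-distance set with $A(\mathcal{X})=A'$.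
   Context: $\mu(x,y)$ denotes the Euclidean distance in $\mathbb{R}^d$. For a finite set $\mathcal{X}$ of distinct vectors in $\mathbb{R}^d$, $A(\mathcal{X})$ denotes the set of distances $\mu(x,y)$ between distinct elements $x,y\in\mathcal{X}$; $\mathcal{X}$ is called an $s$-distance set if $|A(\mathcal{X})|=s$. A clique of a graph is a set of pairwise adjacent vertices. *)

theory Defs
  imports Main Complex_Main
begin

text \<open>Points of R^d are represented as functions nat => real supported on {1..d}.\<close>

definition Rd :: "nat \<Rightarrow> (nat \<Rightarrow> real) set" where
  "Rd d = {x. \<forall>i. i \<notin> {1..d} \<longrightarrow> x i = 0}"

definition mu :: "nat \<Rightarrow> (nat \<Rightarrow> real) \<Rightarrow> (nat \<Rightarrow> real) \<Rightarrow> real" where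
  "mu d x y = sqrt (\<Sum>i=1..d. (x i - y i)^2)"

definition distset :: "nat \<Rightarrow> (nat \<Rightarrow> real) set \<Rightarrow> real set" where
  "distset d X = {mu d x y | x y. x \<in> X \<and> y \<in> X \<and> x \<noteq> y}"

definition is_s_distance_set :: "nat \<Rightarrow> (nat \<Rightarrow> real) set \<Rightarrow> nat \<Rightarrow> bool" where
  "is_s_distance_set d X s \<longleftrightarrow> finite X \<and> card (distset d X) = s"

definition Aset :: "nat \<Rightarrow> real set" where
  "Aset s = {sqrt (2 * real i) | i. i \<in> {1..s}}"

definition Wset :: "nat \<Rightarrow> nat \<Rightarrow> (nat \<Rightarrow> real) set" where
  "Wset d s = {w \<in> Rd d. \<forall>i\<in>{1..d}. w i \<in> Aset s}"

definition Vset :: "nat \<Rightarrow> (nat \<Rightarrow> real) \<Rightarrow> (nat \<Rightarrow> real) set" where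
  "Vset d w = {v \<in> Rd d.
      (\<Sum>i=1..d. ((w 1 ^ 2 - w i ^ 2) / 2 + v 1) ^ 2) = w 1 ^ 2 + 2 * v 1 - 1 \<and>
      (\<forall>j\<in>{2..d}. v j = (w 1 ^ 2 - w j ^ 2) / 2 + v 1)}"

definition GammaV :: "nat \<Rightarrow> nat \<Rightarrow> (nat \<Rightarrow> real) set" where
  "GammaV d s = (\<Union>w\<in>Wset d s. Vset d w)"

definition Gamma_adj :: "nat \<Rightarrow> nat \<Rightarrow> (nat \<Rightarrow> real) \<Rightarrow> (nat \<Rightarrow> real) \<Rightarrow> bool" where
  "Gamma_adj d s x y \<longleftrightarrow> x \<in> GammaV d s \<and> y \<in> GammaV d s \<and> x \<noteq> y \<and> mu d x y \<in> Aset s"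

definition is_clique :: "nat \<Rightarrow> nat \<Rightarrow> (nat \<Rightarrow> real) set \<Rightarrow> bool" where
  "is_clique d s C \<longleftrightarrow> C \<subseteq> GammaV d s \<and> (\<forall>x\<in>C. \<forall>y\<in>C. x \<noteq> y \<longrightarrow> Gamma_adj d s x y)"

definition clique_number :: "nat \<Rightarrow> nat \<Rightarrow> nat" where
  "clique_number d s = Max {card C | C. finite C \<and> is_clique d s C}"

end

theory Submission
  imports Defs
begin

lemma quad_finite:
  fixes c :: "nat \<Rightarrow> real"
  assumes fin: "finite I" and ne: "I \<noteq> {}"
  shows "finite {x. (\<Sum>i\<in>I. (c i + x)^2) = \<alpha> + \<beta> * x}"
proof (cases "{x. (\<Sum>i\<in>I. (c i + x)^2) = \<alpha> + \<beta> * x} = {}")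
  case True then show ?thesis by simp
next
  case False
  then obtain r where r: "(\<Sum>i\<in>I. (c i + r)^2) = \<alpha> + \<beta> * r" by blast
  have n: "real (card I) > 0" using fin ne by (simp add: card_gt_0_iff)
  have "{x. (\<Sum>i\<in>I. (c i + x)^2) = \<alpha> + \<beta> * x} \<subseteq>
        {r, (\<beta> - 2 * sum c I) / real (card I) - r}"
  proof
    fix y assume "y \<in> {x. (\<Sum>i\<in>I. (c i + x)^2) = \<alpha> + \<beta> * x}"
    then have y: "(\<Sum>i\<in>I. (c i + y)^2) = \<alpha> + \<beta> * y" by simp
    have "(\<Sum>i\<in>I. (c i + y)^2) - (\<Sum>i\<in>I. (c i + r)^2)
          = (\<Sum>i\<in>I. (y - r) * (2 * c i + (y + r)))"
      by (simp add: sum_subtractf[symmetric] power2_eq_square algebra_simps)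
    also have "\<dots> = (y - r) * (2 * sum c I + real (card I) * (y + r))"
      by (simp add: sum_distrib_left[symmetric] sum.distrib sum_distrib_left[of 2, symmetric])
    finally have "(y - r) * (2 * sum c I + real (card I) * (y + r) - \<beta>) = 0"
      using y r by (simp add: algebra_simps)
    then have "y = r \<or> 2 * sum c I + real (card I) * (y + r) - \<beta> = 0" by simp
    then show "y \<in> {r, (\<beta> - 2 * sum c I) / real (card I) - r}"
    proof
      assume h: "2 * sum c I + real (card I) * (y + r) - \<beta> = 0"
      have "y = (\<beta> - 2 * sum c I) / real (card I) - r"
        using n h by (simp add: field_simps)
      then show ?thesis by simp
    qed simp
  qed
  then show ?thesis by (rule finite_subset) simp
qed

lemma finite_Aset: "finite (Aset s)"
proof -
  have "Aset s = (\<lambda>i. sqrt (2 * real i)) ` {1..s}" unfolding Aset_def by auto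
  then show ?thesis by simp
qed

lemma Aset_pos: "a \<in> Aset s \<Longrightarrow> a > 0"
  unfolding Aset_def by auto

lemma finite_Wset: "finite (Wset d s)"
proof -
  have "Wset d s \<subseteq> {f. \<forall>x. (x \<in> {1..d} \<longrightarrow> f x \<in> Aset s) \<and> (x \<notin> {1..d} \<longrightarrow> f x = 0)}"
    unfolding Wset_def Rd_def by auto
  then show ?thesis
    by (rule finite_subset) (intro finite_set_of_finite_funs finite_Aset finite_atLeastAtMost)
qed

lemma finite_Vset:
  assumes "d \<ge> 1"
  shows "finite (Vset d w)"
proof -
  define c where "c i = (w 1 ^ 2 - w i ^ 2) / 2" for i
  define R where "R = {x. (\<Sum>i\<in>{1..d}. (c i + x)^2) = (w 1 ^ 2 - 1) + 2 * x}"
  have fR: "finite R" unfolding R_def using assms by (intro quad_finite) auto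
  have "Vset d w \<subseteq> (\<lambda>x. \<lambda>i. if i \<in> {1..d} then c i + x else 0) ` R"
  proof
    fix v assume v: "v \<in> Vset d w"
    have eq: "v = (\<lambda>i. if i \<in> {1..d} then c i + v 1 else 0)"
    proof
      fix i
      have vR: "v \<in> Rd d" and vj: "\<forall>j\<in>{2..d}. v j = (w 1 ^ 2 - w j ^ 2) / 2 + v 1"
        using v unfolding Vset_def by auto
      show "v i = (if i \<in> {1..d} then c i + v 1 else 0)"
      proof (cases "i \<in> {1..d}")
        case False then show ?thesis using vR unfolding Rd_def by auto
      next
        case True
        show ?thesis
        proof (cases "i = 1")
          case True then show ?thesis using \<open>i \<in> {1..d}\<close> by (simp add: c_def)
        next
          case False
          then have "i \<in> {2..d}" using \<open>i \<in> {1..d}\<close> by auto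
          then show ?thesis using vj \<open>i \<in> {1..d}\<close> by (simp add: c_def)
        qed
      qed
    qed
    have veq: "(\<Sum>i=1..d. ((w 1 ^ 2 - w i ^ 2) / 2 + v 1) ^ 2) = w 1 ^ 2 + 2 * v 1 - 1"
      using v unfolding Vset_def by blast
    have "v 1 \<in> R" unfolding R_def c_def using veq by simp
    with eq show "v \<in> (\<lambda>x. \<lambda>i. if i \<in> {1..d} then c i + x else 0) ` R"
      by (rule image_eqI)
  qed
  then show ?thesis by (rule finite_subset) (simp add: fR)
qed

lemma finite_GammaV: "d \<ge> 1 \<Longrightarrow> finite (GammaV d s)"
  unfolding GammaV_def by (intro finite_UN_I finite_Wset finite_Vset)

definition ev :: "nat \<Rightarrow> nat \<Rightarrow> real" where
  "ev k = (\<lambda>i. if i = k then 1 else 0)"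

lemma mu_sym: "mu d x y = mu d y x"
  unfolding mu_def by (simp add: power2_commute)

lemma mu_ev_ev:
  assumes "j \<in> {1..d}" "k \<in> {1..d}" "j \<noteq> k"
  shows "mu d (ev j) (ev k) = sqrt 2"
proof -
  have "(\<Sum>i=1..d. (ev j i - ev k i)^2) = (\<Sum>i=1..d. (if i = j then 1 else 0) + (if i = k then (1::real) else 0))"
    by (rule sum.cong) (auto simp: ev_def assms)
  also have "\<dots> = 2" using assms by (simp add: sum.distrib)
  finally show ?thesis unfolding mu_def by simp
qed

lemma mu_v_ev:
  assumes v: "v \<in> Vset d w" and w: "w \<in> Wset d s" and k: "k \<in> {1..d}"
  shows "mu d v (ev k) = w k"
proof -
  have vi: "\<And>i. i \<in> {1..d} \<Longrightarrow> v i = (w 1 ^ 2 - w i ^ 2) / 2 + v 1"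
  proof -
    fix i assume "i \<in> {1..d}"
    have vj: "\<forall>j\<in>{2..d}. v j = (w 1 ^ 2 - w j ^ 2) / 2 + v 1"
      using v unfolding Vset_def by blast
    show "v i = (w 1 ^ 2 - w i ^ 2) / 2 + v 1"
    proof (cases "i = 1")
      case True then show ?thesis by simp
    next
      case False
      then have "i \<in> {2..d}" using \<open>i \<in> {1..d}\<close> by auto
      then show ?thesis using vj by blast
    qed
  qed
  have veq: "(\<Sum>i=1..d. ((w 1 ^ 2 - w i ^ 2) / 2 + v 1) ^ 2) = w 1 ^ 2 + 2 * v 1 - 1"
    using v unfolding Vset_def by blast
  have "(\<Sum>i=1..d. (v i)^2) = (\<Sum>i=1..d. ((w 1 ^ 2 - w i ^ 2) / 2 + v 1) ^ 2)"
    by (rule sum.cong[OF refl]) (metis vi)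
  then have S: "(\<Sum>i=1..d. (v i)^2) = w 1 ^ 2 + 2 * v 1 - 1" using veq by simp
  have aux: "\<And>S a b c vk::real. S = a + 2*b - 1 \<Longrightarrow> vk = (a - c)/2 + b \<Longrightarrow> S + (1 - 2*vk) = c"
    by (simp add: field_simps)
  have "(\<Sum>i=1..d. (v i - ev k i)^2) = (\<Sum>i=1..d. (v i)^2 + (if i = k then 1 - 2 * v i else 0))"
    by (rule sum.cong) (simp_all add: ev_def power2_diff)
  also have "\<dots> = (\<Sum>i=1..d. (v i)^2) + (1 - 2 * v k)"
    using k by (simp only: sum.distrib sum.delta finite_atLeastAtMost if_True)
  also have "\<dots> = (w k)^2" by (rule aux[OF S vi[OF k]])
  finally have "mu d v (ev k) = sqrt ((w k)^2)" unfolding mu_def by simp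
  also have "\<dots> = \<bar>w k\<bar>" by (rule real_sqrt_abs)
  also have "\<dots> = w k" using w k Aset_pos unfolding Wset_def by force
  finally show ?thesis .
qed

theorem theorem2p1:
  fixes d s :: nat
  assumes "d \<ge> 1" and "s \<ge> 2"
  shows "\<exists>A'. A' \<subseteq> Aset s \<and>
           (\<exists>X. X \<subseteq> Rd d \<and> finite X \<and> card X = d + clique_number d s \<and>
                is_s_distance_set d X (card A') \<and> distset d X = A')"
proof -
  let ?S = "{card C | C. finite C \<and> is_clique d s C}"
  have fG: "finite (GammaV d s)" using assms(1) by (rule finite_GammaV)
  have "?S \<subseteq> card ` Pow (GammaV d s)" unfolding is_clique_def by auto
  then have fS: "finite ?S" by (rule finite_subset) (simp add: fG)
  have "is_clique d s {}" unfolding is_clique_def by simp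
  then have "card {} \<in> ?S" by (intro CollectI exI[of _ "{}"]) simp
  then have "?S \<noteq> {}" by (rule ex_in_conv[THEN iffD1, OF exI])
  then have "clique_number d s \<in> ?S" unfolding clique_number_def by (rule Max_in[OF fS])
  then have "\<exists>C. clique_number d s = card C \<and> finite C \<and> is_clique d s C" by simp
  then obtain C where cC': "clique_number d s = card C" and fC: "finite C" and cl: "is_clique d s C"
    by (elim exE conjE)
  have cC: "card C = clique_number d s" using cC' by simp
  have CG: "C \<subseteq> GammaV d s" using cl unfolding is_clique_def by (elim conjE)
  define E where "E = ev ` {1..d}"
  define X where "X = E \<union> C"
  have injE: "inj_on ev {1..d}"
  proof (rule inj_onI)
    fix x y assume "x \<in> {1..d}" "y \<in> {1..d}" "ev x = ev y"
    then have "ev x x = ev y x" by simp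
    then show "x = y" unfolding ev_def by (auto split: if_splits)
  qed
  have cE: "card E = d" unfolding E_def using card_image[OF injE] by simp
  have vG: "\<exists>w\<in>Wset d s. v \<in> Vset d w" if "v \<in> GammaV d s" for v
    using that unfolding GammaV_def by blast
  have disj: "E \<inter> C = {}"
  proof (rule ccontr)
    assume "E \<inter> C \<noteq> {}"
    then obtain k v where k: "k \<in> {1..d}" and v: "v \<in> C" and eq: "v = ev k" unfolding E_def by blast
    obtain w where w: "w \<in> Wset d s" "v \<in> Vset d w" using vG CG v by blast
    have "mu d v (ev k) = w k" using mu_v_ev[OF w(2) w(1) k] .
    moreover have "w k \<in> Aset s" using w(1) k unfolding Wset_def by blast
    then have "w k > 0" by (rule Aset_pos)
    moreover have "mu d v (ev k) = 0" using eq unfolding mu_def by simp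
    ultimately show False by simp
  qed
  have fX: "finite X" unfolding X_def E_def using fC by simp
  have cX: "card X = d + clique_number d s"
    unfolding X_def using card_Un_disjoint[of E C] disj fC cE cC unfolding E_def by simp
  have XR: "X \<subseteq> Rd d"
  proof -
    have "E \<subseteq> Rd d" unfolding E_def Rd_def ev_def by auto
    moreover have "GammaV d s \<subseteq> Rd d" unfolding GammaV_def Vset_def by auto
    ultimately show ?thesis unfolding X_def using CG by blast
  qed
  have s2: "sqrt 2 \<in> Aset s" unfolding Aset_def using assms(2)
    by (intro CollectI exI[of _ 1]) auto
  have evC: "mu d (ev k) v \<in> Aset s" if k: "k \<in> {1..d}" and v: "v \<in> C" for k v
  proof -
    obtain w where w: "w \<in> Wset d s" "v \<in> Vset d w" using vG CG v by blast
    have "mu d (ev k) v = w k" using mu_v_ev[OF w(2) w(1) k] mu_sym[of d v "ev k"] by simp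
    then show ?thesis using w(1) k unfolding Wset_def by auto
  qed
  have DA: "distset d X \<subseteq> Aset s"
  proof
    fix a assume "a \<in> distset d X"
    then obtain x y where xy: "x \<in> X" "y \<in> X" "x \<noteq> y" and a: "a = mu d x y"
      unfolding distset_def by blast
    show "a \<in> Aset s"
    proof (cases "x \<in> E")
      case True
      then obtain j where j: "j \<in> {1..d}" "x = ev j" unfolding E_def by blast
      show ?thesis
      proof (cases "y \<in> E")
        case True
        then obtain k where k: "k \<in> {1..d}" "y = ev k" unfolding E_def by blast
        then have "j \<noteq> k" using j xy by blast
        then show ?thesis using mu_ev_ev[OF j(1) k(1)] a j k s2 by simp
      next
        case False
        then have "y \<in> C" using xy unfolding X_def by blast
        then show ?thesis using evC j a by simp
      qed
    next
      case False
      then have xC: "x \<in> C" using xy unfolding X_def by blast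
      show ?thesis
      proof (cases "y \<in> E")
        case True
        then obtain k where k: "k \<in> {1..d}" "y = ev k" unfolding E_def by blast
        then show ?thesis using evC[OF k(1) xC] a mu_sym[of d x y] by simp
      next
        case False
        then have "y \<in> C" using xy unfolding X_def by blast
        then show ?thesis using cl xC xy a unfolding is_clique_def Gamma_adj_def by blast
      qed
    qed
  qed
  show ?thesis
    apply (rule exI[of _ "distset d X"])
    using DA XR fX cX unfolding is_s_distance_set_def by auto
qed

end
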